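(* Let $\bar\pi^*$ be an optimal (cost-minimizing) policy for $\bar{\mathcal M}$, with state-action value $\bar Q^*$ and state value $\bar V^*$, and let $\bar A^*(s,a)=\bar Q^*(s,a)-\bar Q^*(s,\bar\pi^* )$. Let $G_0$ be the set of admissible intervention rules $(\bar Q,\mu,0)$ with $\bar Q(d_0,\mu)=\bar V^*(d_0)$. For any $\mathcal G=(\bar Q,\mu,0)\in G_0$ with advantage $\bar A(s,a)=\bar Q(s,a)-\bar Q(s,\mu)$, and any policy $\pi$, let $\pi'=\mathcal G(\pi)$. Then for $d^{\pi'}$-almost every state $s$, $\bar A(s,a)\ge\bar A^*(s,a)$ for all $a\in\mathcal A$.
   Context: $\mathcal M=(\mathcal S,\mathcal A,P,r,\gamma)$ is a discounted MDP with discrete state and action spaces, discount $\gamma\in[0,1)$, initial distribution $d_0$. $\mathcal S$ contains two distinguished states $s_\triangleright,s_\circ$; $\mathcal S_{\mathrm{unsafe}}=\{s_\triangleright,s_\circ\}$, $\mathcal S_{\mathrm{safe}}=\mathcal S\setminus\mathcal S_{\mathrm{unsafe}}$; from $s_\triangleright$ every action leads to $s_\circ$ w.p. 1, $s_\circ$ is absorbing, $d_0(s_\circ)=0$. Cost $c(s,a)=\mathbb 1\{s=s_\triangleright\}$; $\bar{\mathcal M}=(\mathcal S,\mathcal A,P,c,\gamma)$; an optimal policy of $\bar{\mathcal M}$ minimizes expected discounted cost from every state. For $g:\mathcal S\times\mathcal A\to\mathbb R$, $g(s,\mu)=\mathbb E_{a\sim\mu(\cdot|s)}g(s,a)$, $g(d_0,\mu)=\mathbb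 E_{s\sim d_0}g(s,\mu)$. For a policy $\pi$, $d^{\pi}(s)=(1-\gamma)\sum_t\gamma^t\Pr(s_t=s)$ for trajectories of $\pi$ in $\mathcal M$ from $s_0\sim d_0$. Intervention rule: a triple $\mathcal G=(\bar Q,\mu,\eta)$, $\eta\in[0,1]$, backup policy $\mu$, $\bar Q:\mathcal S_{\mathrm{safe}}\times\mathcal A\to[0,1]$ extended by $\bar Q(s_\triangleright,a)=1$, $\bar Q(s_\circ,a)=0$; intervention set $\mathcal I=\{(s,a)\in\mathcal S_{\mathrm{safe}}\times\mathcal A:\bar Q(s,a)-\bar Q(s,\mu)>\eta\}$; shielded policy $\mathcal G(\pi)(a|s)=\pi(a|s)\mathbb 1\{(s,a)\notin\mathcal I\}+w(s)\mu(a|s)$ with $w(s)=\sum_{\tilde a:(s,\tilde a)\in\mathcal I}\pi(\tilde a|s)$. Admissible: for all $s\in\mathcal S_{\mathrm{safe}},a$: $\bar Q(s,a)\in[0,\gamma]$ and $\bar Q(s,a)\ge c(s,a)+\gamma\mathbb E_{s'\sim P(\cdot|s,a)}[\bar Q(s',\mu)]$. *)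

theory Defs
  imports "HOL-Probability.Probability"
begin

abbreviation Ex_pmf :: "'b pmf \<Rightarrow> ('b \<Rightarrow> real) \<Rightarrow> real" where
  "Ex_pmf p f \<equiv> measure_pmf.expectation p f"

primrec state_dist :: "('s \<Rightarrow> 'a \<Rightarrow> 's pmf) \<Rightarrow> ('s \<Rightarrow> 'a pmf) \<Rightarrow> 's pmf \<Rightarrow> nat \<Rightarrow> 's pmf" where
  "state_dist P pol d 0 = d"
| "state_dist P pol d (Suc n) =
     bind_pmf (state_dist P pol d n) (\<lambda>s. bind_pmf (pol s) (\<lambda>a. P s a))"

definition occupancy ::
  "('s \<Rightarrow> 'a \<Rightarrow> 's pmf) \<Rightarrow> real \<Rightarrow> 's pmf \<Rightarrow> ('s \<Rightarrow> 'a pmf) \<Rightarrow> 's \<Rightarrow> real" where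
  "occupancy P \<gamma> d0 pol s = (1 - \<gamma>) * (\<Sum>t. \<gamma> ^ t * pmf (state_dist P pol d0 t) s)"

definition value_fn ::
  "('s \<Rightarrow> 'a \<Rightarrow> 's pmf) \<Rightarrow> ('s \<Rightarrow> 'a \<Rightarrow> real) \<Rightarrow> real \<Rightarrow> ('s \<Rightarrow> 'a pmf) \<Rightarrow> 's \<Rightarrow> real" where
  "value_fn P c \<gamma> pol s =
     (\<Sum>t. \<gamma> ^ t * Ex_pmf (state_dist P pol (return_pmf s) t) (\<lambda>s'. Ex_pmf (pol s') (\<lambda>a. c s' a)))"

definition Q_fn ::
  "('s \<Rightarrow> 'a \<Rightarrow> 's pmf) \<Rightarrow> ('s \<Rightarrow> 'a \<Rightarrow> real) \<Rightarrow> real \<Rightarrow> ('s \<Rightarrow> 'a pmf) \<Rightarrow> 's \<Rightarrow> 'a \<Rightarrow> real" where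
  "Q_fn P c \<gamma> pol s a = c s a + \<gamma> * Ex_pmf (P s a) (value_fn P c \<gamma> pol)"

text \<open>g(s,mu) = E_{a ~ mu(.|s)} g(s,a).\<close>
definition at_pol :: "('s \<Rightarrow> 'a \<Rightarrow> real) \<Rightarrow> 's \<Rightarrow> ('s \<Rightarrow> 'a pmf) \<Rightarrow> real" where
  "at_pol g s mu = Ex_pmf (mu s) (g s)"

definition optimal_policy ::
  "('s \<Rightarrow> 'a \<Rightarrow> 's pmf) \<Rightarrow> ('s \<Rightarrow> 'a \<Rightarrow> real) \<Rightarrow> real \<Rightarrow> ('s \<Rightarrow> 'a pmf) \<Rightarrow> bool" where
  "optimal_policy P c \<gamma> pistar \<longleftrightarrow>
     (\<forall>pol s. value_fn P c \<gamma> pistar s \<le> value_fn P c \<gamma> pol s)"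

text \<open>Extension of Qbar (given on safe states) by Qbar(s_tri,a)=1, Qbar(s_circ,a)=0.\<close>
definition Qext :: "'s \<Rightarrow> 's \<Rightarrow> ('s \<Rightarrow> 'a \<Rightarrow> real) \<Rightarrow> 's \<Rightarrow> 'a \<Rightarrow> real" where
  "Qext s_tri s_circ Qb s a = (if s = s_tri then 1 else if s = s_circ then 0 else Qb s a)"

definition interv_set ::
  "'s \<Rightarrow> 's \<Rightarrow> ('s \<Rightarrow> 'a \<Rightarrow> real) \<Rightarrow> ('s \<Rightarrow> 'a pmf) \<Rightarrow> real \<Rightarrow> ('s \<times> 'a) set" where
  "interv_set s_tri s_circ Qb mu \<eta> =
     {(s, a). s \<noteq> s_tri \<and> s \<noteq> s_circ \<and>
        Qext s_tri s_circ Qb s a - at_pol (Qext s_tri s_circ Qb) s mu > \<eta>}"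

definition shielded ::
  "'s \<Rightarrow> 's \<Rightarrow> ('s \<Rightarrow> 'a \<Rightarrow> real) \<Rightarrow> ('s \<Rightarrow> 'a pmf) \<Rightarrow> real \<Rightarrow> ('s \<Rightarrow> 'a pmf) \<Rightarrow> 's \<Rightarrow> 'a pmf" where
  "shielded s_tri s_circ Qb mu \<eta> pol s =
     bind_pmf (pol s) (\<lambda>a'. if (s, a') \<in> interv_set s_tri s_circ Qb mu \<eta> then mu s else return_pmf a')"

definition admissible ::
  "('s \<Rightarrow> 'a \<Rightarrow> 's pmf) \<Rightarrow> ('s \<Rightarrow> 'a \<Rightarrow> real) \<Rightarrow> real \<Rightarrow> 's \<Rightarrow> 's \<Rightarrow>
   ('s \<Rightarrow> 'a \<Rightarrow> real) \<Rightarrow> ('s \<Rightarrow> 'a pmf) \<Rightarrow> bool" where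
  "admissible P c \<gamma> s_tri s_circ Qb mu \<longleftrightarrow>
     (\<forall>s a. s \<noteq> s_tri \<and> s \<noteq> s_circ \<longrightarrow>
        Qb s a \<in> {0..\<gamma>} \<and>
        Qb s a \<ge> c s a + \<gamma> * Ex_pmf (P s a) (\<lambda>s'. at_pol (Qext s_tri s_circ Qb) s' mu))"

lemma pmf_shielded:
  fixes s_tri s_circ :: 's and Qb :: "'s \<Rightarrow> 'a \<Rightarrow> real" and mu :: "'s \<Rightarrow> 'a pmf" and \<eta> :: real and I
  defines "I \<equiv> interv_set s_tri s_circ Qb mu \<eta>"
  shows "pmf (shielded s_tri s_circ Qb mu \<eta> pol s) a =
     pmf (pol s) a * (if (s, a) \<notin> I then 1 else 0)
     + measure_pmf.prob (pol s) {a'. (s, a') \<in> I} * pmf (mu s) a"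
proof -
  have "pmf (shielded s_tri s_circ Qb mu \<eta> pol s) a =
     Ex_pmf (pol s) (\<lambda>a'. (if (s,a') \<in> I then pmf (mu s) a else 0)
        + (if (s,a') \<notin> I then indicator {a} a' else 0))"
    unfolding shielded_def I_def[symmetric] pmf_bind
    by (intro Bochner_Integration.integral_cong) (auto simp: pmf_return indicator_def)
  also have "\<dots> = Ex_pmf (pol s) (\<lambda>a'. pmf (mu s) a * indicator {a'. (s,a') \<in> I} a'
        + (if (s, a) \<notin> I then 1 else 0) * indicator {a} a')"
    by (intro Bochner_Integration.integral_cong) (auto simp: indicator_def)
  also have "\<dots> = Ex_pmf (pol s) (\<lambda>a'. pmf (mu s) a * indicator {a'. (s,a') \<in> I} a')
        + Ex_pmf (pol s) (\<lambda>a'. (if (s, a) \<notin> I then 1 else 0) * indicator {a} a')"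
    by (rule Bochner_Integration.integral_add)
       (auto intro!: measure_pmf.integrable_const_bound[where B=1]
             simp: indicator_def pmf_le_1)
  also have "\<dots> = pmf (pol s) a * (if (s, a) \<notin> I then 1 else 0)
     + measure_pmf.prob (pol s) {a'. (s, a') \<in> I} * pmf (mu s) a"
    by (simp add: measure_pmf_single mult.commute)
  finally show ?thesis .
qed

end

theory Submission
  imports Defs
begin

lemma int_bdd: fixes f :: "'b \<Rightarrow> real"
  assumes "\<And>x. \<bar>f x\<bar> \<le> B" shows "integrable (measure_pmf p) f"
  by (rule measure_pmf.integrable_const_bound[where B=B]) (auto simp: assms)

lemma int_bind: fixes f :: "'b \<Rightarrow> real"
  assumes "\<And>x. \<bar>f x\<bar> \<le> B"
  shows "Ex_pmf (bind_pmf M N) f = Ex_pmf M (\<lambda>x. Ex_pmf (N x) f)"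
  unfolding measure_pmf_bind
  by (rule integral_bind[where K="count_space UNIV" and B=B and B'=1])
     (auto simp: assms measure_pmf.emeasure_space_1 measure_pmf_in_subprob_algebra
       intro: measure_pmf.finite_measure_axioms)

lemma ex_return: "Ex_pmf (return_pmf x) f = f x"
  by (simp add: return_pmf.rep_eq integral_return)

lemma ex_bounds: fixes f :: "'b \<Rightarrow> real"
  assumes "\<And>x. a \<le> f x \<and> f x \<le> b"
  shows "a \<le> Ex_pmf p f \<and> Ex_pmf p f \<le> b"
proof -
  have i: "integrable (measure_pmf p) f"
    by (rule int_bdd[where B="\<bar>a\<bar> + \<bar>b\<bar>"]) (smt (verit) assms)
  have "Ex_pmf p (\<lambda>_. a) \<le> Ex_pmf p f"
    by (rule integral_mono) (use i assms in auto)
  moreover have "Ex_pmf p f \<le> Ex_pmf p (\<lambda>_. b)"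
    by (rule integral_mono) (use i assms in auto)
  ultimately show ?thesis by simp
qed

lemma ex_mono: fixes f g :: "'b \<Rightarrow> real"
  assumes "\<And>x. \<bar>f x\<bar> \<le> B" "\<And>x. \<bar>g x\<bar> \<le> B" "\<And>x. f x \<le> g x"
  shows "Ex_pmf p f \<le> Ex_pmf p g"
  by (rule integral_mono) (auto intro: int_bdd assms)

lemma ex_zero_supp: fixes f :: "'b \<Rightarrow> real"
  assumes "\<And>x. 0 \<le> f x" "\<And>x. f x \<le> B" "Ex_pmf p f = 0" "x \<in> set_pmf p"
  shows "f x = 0"
proof -
  have i: "integrable (measure_pmf p) f"
    by (rule int_bdd[where B=B]) (smt (verit) assms)
  have "AE x in measure_pmf p. f x = 0"
    using integral_nonneg_eq_0_iff_AE[OF i] assms by auto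
  then show ?thesis using assms(4) by (simp add: AE_measure_pmf_iff)
qed

lemma ex_zero_supp': fixes f :: "'b \<Rightarrow> real"
  assumes "Ex_pmf p f = 0" "x \<in> set_pmf p" "\<And>x. 0 \<le> f x" "\<And>x. f x \<le> B"
  shows "f x = 0"
  using ex_zero_supp[of f B p x] assms by blast

lemma sd_Suc': "state_dist P pol d (Suc n) =
   state_dist P pol (bind_pmf d (\<lambda>s. bind_pmf (pol s) (\<lambda>a. P s a))) n"
  by (induction n) auto

lemma sd_bind: "state_dist P pol d n = bind_pmf d (\<lambda>s. state_dist P pol (return_pmf s) n)"
proof (induction n)
  case 0 then show ?case by (simp add: bind_return_pmf')
next
  case (Suc n) then show ?case by (simp add: bind_assoc_pmf)
qed

locale costmdp =
  fixes P :: "'s \<Rightarrow> 'a \<Rightarrow> 's pmf" and c :: "'s \<Rightarrow> 'a \<Rightarrow> real" and \<gamma> :: real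
  assumes g0: "0 \<le> \<gamma>" and g1: "\<gamma> < 1" and cb: "\<And>s a. 0 \<le> c s a \<and> c s a \<le> 1"
begin

definition cbar where "cbar pol s = Ex_pmf (pol s) (\<lambda>a. c s a)"
definition K where "K pol s = bind_pmf (pol s) (\<lambda>a. P s a)"

lemma cbar_b: "0 \<le> cbar pol s \<and> cbar pol s \<le> 1"
  unfolding cbar_def by (rule ex_bounds) (use cb in auto)

definition e where "e pol s t = Ex_pmf (state_dist P pol (return_pmf s) t) (cbar pol)"

lemma e_b: "0 \<le> e pol s t \<and> e pol s t \<le> 1"
  unfolding e_def by (rule ex_bounds) (use cbar_b in auto)

lemma value_eq: "value_fn P c \<gamma> pol s = (\<Sum>t. \<gamma>^t * e pol s t)"
  unfolding value_fn_def e_def cbar_def by simp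

lemma summ: "summable (\<lambda>t. \<gamma>^t * e pol s t)"
proof (rule summable_comparison_test'[where g="\<lambda>t. \<gamma>^t"])
  show "summable (\<lambda>t. \<gamma>^t)" using g0 g1 by simp
  fix n show "norm (\<gamma>^n * e pol s n) \<le> \<gamma>^n"
    using e_b[of pol s n] g0 by (simp add: abs_mult mult_left_le)
qed

lemma V_b: "0 \<le> value_fn P c \<gamma> pol s \<and> value_fn P c \<gamma> pol s \<le> 1/(1-\<gamma>)"
proof
  show "0 \<le> value_fn P c \<gamma> pol s" unfolding value_eq
    by (rule suminf_nonneg[OF summ]) (use e_b g0 in simp)
  have "(\<Sum>t. \<gamma>^t * e pol s t) \<le> (\<Sum>t. \<gamma>^t)"
    by (rule suminf_le[OF _ summ]) (use e_b g0 g1 in \<open>auto simp: mult_left_le\<close>)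
  also have "\<dots> = 1/(1-\<gamma>)" using suminf_geometric[of \<gamma>] g0 g1 by simp
  finally show "value_fn P c \<gamma> pol s \<le> 1/(1-\<gamma>)" unfolding value_eq .
qed

lemma V_abs: "\<bar>value_fn P c \<gamma> pol s\<bar> \<le> 1/(1-\<gamma>)"
  using V_b[of pol s] by simp

lemma Tstep:
  assumes W: "\<And>s. \<bar>W s\<bar> \<le> B"
  shows "Ex_pmf (pol s) (\<lambda>a. c s a + \<gamma> * Ex_pmf (P s a) W) = cbar pol s + \<gamma> * Ex_pmf (K pol s) W"
proof -
  have iW: "\<And>a. \<bar>Ex_pmf (P s a) W\<bar> \<le> B"
    using ex_bounds[of "-B" W B "P s _"] W abs_le_iff by (metis abs_le_D1 abs_le_D2 abs_le_iff minus_le_iff)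
  have "Ex_pmf (pol s) (\<lambda>a. c s a + \<gamma> * Ex_pmf (P s a) W)
     = Ex_pmf (pol s) (\<lambda>a. c s a) + Ex_pmf (pol s) (\<lambda>a. \<gamma> * Ex_pmf (P s a) W)"
  proof (rule Bochner_Integration.integral_add)
    show "integrable (measure_pmf (pol s)) (\<lambda>a. c s a)"
      by (rule int_bdd[where B=1]) (use cb in auto)
    show "integrable (measure_pmf (pol s)) (\<lambda>a. \<gamma> * Ex_pmf (P s a) W)"
      by (rule int_bdd[where B="\<gamma>*B"]) (simp add: abs_mult iW g0 mult_left_mono)
  qed
  also have "\<dots> = cbar pol s + \<gamma> * Ex_pmf (K pol s) W"
    unfolding cbar_def K_def by (simp add: int_bind[OF W])
  finally show ?thesis .
qed

lemma bellman: "value_fn P c \<gamma> pol s =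
   Ex_pmf (pol s) (\<lambda>a. c s a + \<gamma> * Ex_pmf (P s a) (value_fn P c \<gamma> pol))"
proof -
  define V where "V = value_fn P c \<gamma> pol"
  define f where "f n s' = \<gamma>^n * e pol s' n" for n s'
  have fb: "\<bar>f n x\<bar> \<le> \<gamma>^n" for n x
    using e_b[of pol x n] g0 by (simp add: f_def abs_mult mult_left_le)
  have V_f: "V x = (\<Sum>n. f n x)" for x unfolding V_def value_eq f_def ..
  have e0: "e pol s 0 = cbar pol s" by (simp add: e_def ex_return)
  have eS: "e pol s (Suc n) = Ex_pmf (K pol s) (\<lambda>s'. e pol s' n)" for n
  proof -
    have "state_dist P pol (return_pmf s) (Suc n) = bind_pmf (K pol s) (\<lambda>s'. state_dist P pol (return_pmf s') n)"
      by (simp only: sd_Suc' bind_return_pmf K_def) (rule sd_bind)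
    then show ?thesis unfolding e_def
      by (simp add: int_bind[where B=1] cbar_b abs_le_iff)
  qed
  have fS: "f (Suc n) s = \<gamma> * Ex_pmf (K pol s) (f n)" for n
  proof -
    have "f (Suc n) s = \<gamma> * (\<gamma>^n * Ex_pmf (K pol s) (\<lambda>s'. e pol s' n))"
      by (simp add: f_def eS)
    also have "\<dots> = \<gamma> * Ex_pmf (K pol s) (\<lambda>s'. \<gamma>^n * e pol s' n)" by simp
    also have "(\<lambda>s'. \<gamma>^n * e pol s' n) = f n" by (simp add: fun_eq_iff f_def)
    finally show ?thesis .
  qed
  have sf: "summable (\<lambda>n. f n s)" unfolding f_def by (rule summ)
  have "V s = (\<Sum>n. f (Suc n) s) + f 0 s" using suminf_split_head[OF sf] V_f by simp
  also have "(\<Sum>n. f (Suc n) s) = (\<Sum>n. \<gamma> * Ex_pmf (K pol s) (f n))" by (simp add: fS)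
  also have "\<dots> = \<gamma> * (\<Sum>n. Ex_pmf (K pol s) (f n))"
  proof (rule suminf_mult)
    show "summable (\<lambda>n. Ex_pmf (K pol s) (f n))"
    proof (rule summable_comparison_test'[where g="\<lambda>t. \<gamma>^t"])
      show "summable (\<lambda>t. \<gamma>^t)" using g0 g1 by simp
      fix n show "norm (Ex_pmf (K pol s) (f n)) \<le> \<gamma>^n"
      proof -
        have "-(\<gamma>^n) \<le> Ex_pmf (K pol s) (f n) \<and> Ex_pmf (K pol s) (f n) \<le> \<gamma>^n"
          by (rule ex_bounds) (use fb in \<open>auto simp: abs_le_iff minus_le_iff\<close>)
        then show ?thesis by (simp add: abs_le_iff)
      qed
    qed
  qed
  also have "(\<Sum>n. Ex_pmf (K pol s) (f n)) = Ex_pmf (K pol s) V"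
    unfolding V_f
  proof (rule integral_suminf[symmetric])
    show "integrable (measure_pmf (K pol s)) (f i)" for i by (rule int_bdd[OF fb])
    show "AE x in measure_pmf (K pol s). summable (\<lambda>i. norm (f i x))"
    proof (rule AE_I2, rule summable_comparison_test'[where g="\<lambda>t. \<gamma>^t"])
      show "summable (\<lambda>t. \<gamma>^t)" using g0 g1 by simp
    qed (use fb in simp)
    show "summable (\<lambda>i. Ex_pmf (K pol s) (\<lambda>x. norm (f i x)))"
    proof (rule summable_comparison_test'[where g="\<lambda>t. \<gamma>^t"])
      show "summable (\<lambda>t. \<gamma>^t)" using g0 g1 by simp
      fix n show "norm (Ex_pmf (K pol s) (\<lambda>x. norm (f n x))) \<le> \<gamma>^n"
        using ex_bounds[of "0" "\<lambda>x. norm (f n x)" "\<gamma>^n" "K pol s"] fb by simp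
    qed
  qed
  also have "f 0 s = cbar pol s" by (simp add: f_def e0)
  finally have "V s = \<gamma> * Ex_pmf (K pol s) V + cbar pol s" .
  moreover have "Ex_pmf (pol s) (\<lambda>a. c s a + \<gamma> * Ex_pmf (P s a) V) = cbar pol s + \<gamma> * Ex_pmf (K pol s) V"
    by (rule Tstep[where B="1/(1-\<gamma>)"]) (simp add: V_def V_abs)
  ultimately show ?thesis unfolding V_def by simp
qed

lemma upper:
  assumes Wb: "\<And>s. 0 \<le> W s \<and> W s \<le> B"
    and Wsup: "\<And>s. Ex_pmf (pol s) (\<lambda>a. c s a + \<gamma> * Ex_pmf (P s a) W) \<le> W s"
  shows "value_fn P c \<gamma> pol s \<le> W s"
proof -
  have Wa: "\<bar>W s\<bar> \<le> B" for s using Wb[of s] by (simp add: abs_of_nonneg)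
  have KW: "\<bar>Ex_pmf (K pol s) W\<bar> \<le> B" for s
  proof -
    have "0 \<le> Ex_pmf (K pol s) W \<and> Ex_pmf (K pol s) W \<le> B" by (rule ex_bounds) (rule Wb)
    then show ?thesis by simp
  qed
  have step: "cbar pol s + \<gamma> * Ex_pmf (K pol s) W \<le> W s" for s
    using Wsup[of s] Tstep[OF Wa, of pol s] by simp
  have main: "(\<Sum>t<n. \<gamma>^t * Ex_pmf (state_dist P pol d t) (cbar pol))
      + \<gamma>^n * Ex_pmf (state_dist P pol d n) W \<le> Ex_pmf d W" for d n
  proof (induction n)
    case 0 then show ?case by simp
  next
    case (Suc n)
    let ?D = "state_dist P pol d n"
    have eq: "Ex_pmf (state_dist P pol d (Suc n)) W = Ex_pmf ?D (\<lambda>s. Ex_pmf (K pol s) W)"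
      by (simp add: int_bind[OF Wa] K_def)
    have "Ex_pmf ?D (cbar pol) + \<gamma> * Ex_pmf ?D (\<lambda>s. Ex_pmf (K pol s) W)
        = Ex_pmf ?D (\<lambda>s. cbar pol s + \<gamma> * Ex_pmf (K pol s) W)"
    proof -
      have "Ex_pmf ?D (\<lambda>s. cbar pol s + \<gamma> * Ex_pmf (K pol s) W) =
          Ex_pmf ?D (cbar pol) + Ex_pmf ?D (\<lambda>s. \<gamma> * Ex_pmf (K pol s) W)"
      proof (rule Bochner_Integration.integral_add)
        show "integrable (measure_pmf ?D) (cbar pol)"
          by (rule int_bdd[where B=1]) (use cbar_b in \<open>simp add: abs_le_iff\<close>)
        show "integrable (measure_pmf ?D) (\<lambda>s. \<gamma> * Ex_pmf (K pol s) W)"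
          by (rule int_bdd[where B="\<gamma>*B"]) (simp add: abs_mult KW g0 mult_left_mono)
      qed
      then show ?thesis by simp
    qed
    also have "\<dots> \<le> Ex_pmf ?D W"
    proof (rule ex_mono[where B="1 + \<gamma>*B + B"])
      fix x
      show "\<bar>cbar pol x + \<gamma> * Ex_pmf (K pol x) W\<bar> \<le> 1 + \<gamma>*B + B"
      proof -
        have "\<bar>\<gamma> * Ex_pmf (K pol x) W\<bar> \<le> \<gamma> * B" by (simp add: abs_mult g0 mult_left_mono KW)
        moreover have "\<bar>cbar pol x\<bar> \<le> 1" using cbar_b[of pol x] by simp
        moreover have "0 \<le> B" using Wb[of x] by simp
        ultimately show ?thesis using abs_triangle_ineq[of "cbar pol x" "\<gamma> * Ex_pmf (K pol x) W"] by linarith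
      qed
      show "\<bar>W x\<bar> \<le> 1 + \<gamma>*B + B"
      proof -
        have "0 \<le> \<gamma>*B" using Wb[of x] g0 by simp
        then show ?thesis using Wa[of x] by linarith
      qed
      show "cbar pol x + \<gamma> * Ex_pmf (K pol x) W \<le> W x" by (rule step)
    qed
    finally have ineq: "Ex_pmf ?D (cbar pol) + \<gamma> * Ex_pmf (state_dist P pol d (Suc n)) W \<le> Ex_pmf ?D W"
      using eq by simp
    have "(\<Sum>t<Suc n. \<gamma>^t * Ex_pmf (state_dist P pol d t) (cbar pol))
      + \<gamma>^Suc n * Ex_pmf (state_dist P pol d (Suc n)) W
      = (\<Sum>t<n. \<gamma>^t * Ex_pmf (state_dist P pol d t) (cbar pol))
      + \<gamma>^n * (Ex_pmf ?D (cbar pol) + \<gamma> * Ex_pmf (state_dist P pol d (Suc n)) W)"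
      by (simp add: algebra_simps)
    also have "\<dots> \<le> (\<Sum>t<n. \<gamma>^t * Ex_pmf (state_dist P pol d t) (cbar pol)) + \<gamma>^n * Ex_pmf ?D W"
      using ineq g0 by (simp add: mult_left_mono)
    also have "\<dots> \<le> Ex_pmf d W" by (rule Suc.IH)
    finally show ?case .
  qed
  have "value_fn P c \<gamma> pol s = (\<Sum>t. \<gamma>^t * e pol s t)" by (rule value_eq)
  also have "\<dots> \<le> W s"
  proof (rule suminf_le_const[OF summ])
    fix n
    have "(\<Sum>t<n. \<gamma>^t * e pol s t) + \<gamma>^n * Ex_pmf (state_dist P pol (return_pmf s) n) W \<le> W s"
      using main[of "return_pmf s" n] by (simp add: e_def ex_return)
    moreover have "0 \<le> \<gamma>^n * Ex_pmf (state_dist P pol (return_pmf s) n) W"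
      using g0 ex_bounds[of 0 W B] Wb by (simp add: ex_bounds)
    ultimately show "(\<Sum>t<n. \<gamma>^t * e pol s t) \<le> W s" by linarith
  qed
  finally show ?thesis .
qed

end

theorem mainTheorem6:
  fixes P :: "'s::countable \<Rightarrow> 'a::countable \<Rightarrow> 's pmf"
    and \<gamma> :: real and d0 :: "'s pmf" and s_tri s_circ :: 's
    and c :: "'s \<Rightarrow> 'a \<Rightarrow> real"
    and pistar :: "'s \<Rightarrow> 'a pmf"
    and Qb :: "'s \<Rightarrow> 'a \<Rightarrow> real" and mu :: "'s \<Rightarrow> 'a pmf"
    and pol :: "'s \<Rightarrow> 'a pmf"
  assumes gamma: "0 \<le> \<gamma>" "\<gamma> < 1"
    and distinct: "s_tri \<noteq> s_circ"
    and tri_trans: "\<And>a. P s_tri a = return_pmf s_circ"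
    and circ_abs: "\<And>a. P s_circ a = return_pmf s_circ"
    and d0_circ: "pmf d0 s_circ = 0"
    and cost: "c = (\<lambda>s a. if s = s_tri then 1 else 0)"
    and opt: "optimal_policy P c \<gamma> pistar"
    and adm: "admissible P c \<gamma> s_tri s_circ Qb mu"
    and G0: "Ex_pmf d0 (\<lambda>s. at_pol (Qext s_tri s_circ Qb) s mu)
             = Ex_pmf d0 (value_fn P c \<gamma> pistar)"
  shows "\<forall>s. occupancy P \<gamma> d0 (shielded s_tri s_circ Qb mu 0 pol) s > 0 \<longrightarrow>
           (\<forall>a. Qext s_tri s_circ Qb s a - at_pol (Qext s_tri s_circ Qb) s mu
                \<ge> Q_fn P c \<gamma> pistar s a - at_pol (Q_fn P c \<gamma> pistar) s pistar)"
proof -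
  interpret M: costmdp P c \<gamma>
    by unfold_locales (use gamma cost in auto)
  define U where "U s = at_pol (Qext s_tri s_circ Qb) s mu" for s
  define V where "V = value_fn P c \<gamma> pistar"
  define Q where "Q = Q_fn P c \<gamma> pistar"
  define pol' where "pol' = shielded s_tri s_circ Qb mu 0 pol"
  have Qext_b: "0 \<le> Qext s_tri s_circ Qb s a \<and> Qext s_tri s_circ Qb s a \<le> 1" for s a
    using adm gamma unfolding admissible_def Qext_def by (auto, smt (verit))
  have U_b: "0 \<le> U s \<and> U s \<le> 1" for s
    unfolding U_def at_pol_def by (rule ex_bounds) (rule Qext_b)
  have U_abs: "\<bar>U s\<bar> \<le> 1" for s using U_b[of s] by simp
  have V_abs: "\<bar>V s\<bar> \<le> 1/(1-\<gamma>)" for s unfolding V_def by (rule M.V_abs)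
  have V_b: "0 \<le> V s" for s unfolding V_def using M.V_b by auto
  have Qext_tri: "Qext s_tri s_circ Qb s_tri a = 1" for a by (simp add: Qext_def)
  have Qext_circ: "Qext s_tri s_circ Qb s_circ a = 0" for a using distinct by (simp add: Qext_def)
  have U_circ: "U s_circ = 0"
  proof -
    have "Qext s_tri s_circ Qb s_circ = (\<lambda>_. 0)" using Qext_circ by auto
    then show ?thesis by (simp add: U_def at_pol_def)
  qed
  have c_circ: "c s_circ a = 0" for a using cost distinct by simp
  have c_tri: "c s_tri a = 1" for a using cost by simp
  have c_safe: "s \<noteq> s_tri \<Longrightarrow> c s a = 0" for s a using cost by simp
  have bell: "V s = Ex_pmf (pistar s) (\<lambda>a. c s a + \<gamma> * Ex_pmf (P s a) V)" for s
    unfolding V_def by (rule M.bellman)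
  have V_circ: "V s_circ = 0"
  proof -
    have "V s_circ = Ex_pmf (pistar s_circ) (\<lambda>a. \<gamma> * V s_circ)"
      using bell[of s_circ] by (simp add: c_circ circ_abs ex_return)
    then have "V s_circ = \<gamma> * V s_circ" by simp
    then show ?thesis using gamma by (metis mult_cancel_right1 mult_eq_0_iff less_irrefl)
  qed
  have Qadm: "c s a + \<gamma> * Ex_pmf (P s a) U \<le> Qext s_tri s_circ Qb s a" for s a
  proof (cases "s = s_tri \<or> s = s_circ")
    case True then show ?thesis
      using distinct by (auto simp: Qext_tri Qext_circ c_tri c_circ tri_trans circ_abs ex_return U_circ)
  next
    case False then show ?thesis
      using adm unfolding admissible_def U_def Qext_def by auto
  qed
  have V_le_U: "V s \<le> U s" for s
  proof -
    have "value_fn P c \<gamma> mu s \<le> U s"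
    proof (rule M.upper[where B=1])
      show "0 \<le> U s \<and> U s \<le> 1" for s by (rule U_b)
      fix s show "Ex_pmf (mu s) (\<lambda>a. c s a + \<gamma> * Ex_pmf (P s a) U) \<le> U s"
        unfolding U_def at_pol_def
      proof (rule ex_mono[where B="2"])
        fix a
        have "\<bar>Ex_pmf (P s a) U\<bar> \<le> 1" using ex_bounds[of 0 U 1 "P s a"] U_b by auto
        then have "\<bar>\<gamma> * Ex_pmf (P s a) U\<bar> \<le> 1" using gamma by (simp add: abs_mult mult_le_one)
        then show "\<bar>c s a + \<gamma> * Ex_pmf (P s a) (\<lambda>s. Ex_pmf (mu s) (Qext s_tri s_circ Qb s))\<bar> \<le> 2"
          using cost unfolding U_def at_pol_def by auto
        show "\<bar>Qext s_tri s_circ Qb s a\<bar> \<le> 2" using Qext_b[of s a] by simp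
        show "c s a + \<gamma> * Ex_pmf (P s a) (\<lambda>s. Ex_pmf (mu s) (Qext s_tri s_circ Qb s)) \<le> Qext s_tri s_circ Qb s a"
          using Qadm[of s a] unfolding U_def at_pol_def .
      qed
    qed
    moreover have "V s \<le> value_fn P c \<gamma> mu s" using opt unfolding optimal_policy_def V_def by auto
    ultimately show ?thesis by simp
  qed
  have Q_def': "Q s a = c s a + \<gamma> * Ex_pmf (P s a) V" for s a
    unfolding Q_def Q_fn_def V_def ..
  have V_le_Q: "V s \<le> Q s a" for s a
  proof (rule ccontr)
    assume "\<not> V s \<le> Q s a"
    then have lt: "Q s a < V s" by simp
    define pol2 where "pol2 = pistar(s := return_pmf a)"
    define V2 where "V2 = value_fn P c \<gamma> pol2"
    have V2_le: "V2 x \<le> V x" for x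
      unfolding V2_def
    proof (rule M.upper[where B="1/(1-\<gamma>)"])
      show "0 \<le> V x \<and> V x \<le> 1/(1-\<gamma>)" for x unfolding V_def by (rule M.V_b)
      fix x show "Ex_pmf (pol2 x) (\<lambda>b. c x b + \<gamma> * Ex_pmf (P x b) V) \<le> V x"
      proof (cases "x = s")
        case True then show ?thesis using lt by (simp add: pol2_def ex_return Q_def')
      next
        case False then show ?thesis using bell[of x] by (simp add: pol2_def)
      qed
    qed
    have "V2 s = Ex_pmf (pol2 s) (\<lambda>b. c s b + \<gamma> * Ex_pmf (P s b) V2)"
      unfolding V2_def by (rule M.bellman)
    also have "\<dots> = c s a + \<gamma> * Ex_pmf (P s a) V2" by (simp add: pol2_def ex_return)
    also have "\<dots> \<le> c s a + \<gamma> * Ex_pmf (P s a) V"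
    proof -
      have "Ex_pmf (P s a) V2 \<le> Ex_pmf (P s a) V"
        by (rule ex_mono[where B="1/(1-\<gamma>)"]) (auto simp: V2_def V_def M.V_abs V2_le[unfolded V2_def V_def])
      then show ?thesis using gamma by (simp add: mult_left_mono)
    qed
    also have "\<dots> = Q s a" by (simp add: Q_def')
    finally have "V2 s < V s" using lt by simp
    moreover have "V s \<le> V2 s" using opt unfolding optimal_policy_def V_def V2_def by auto
    ultimately show False by simp
  qed
  have atQ: "at_pol Q s pistar = V s" for s
    unfolding at_pol_def Q_def' using bell[of s] by simp
  have one_le: "1 \<le> 1/(1-\<gamma>)" using gamma by (simp add: field_simps)
  have EU_ge: "Ex_pmf (P s a) V \<le> Ex_pmf (P s a) U" for s a
  proof (rule ex_mono[where B="1/(1-\<gamma>)"])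
    fix x
    show "\<bar>V x\<bar> \<le> 1/(1-\<gamma>)" by (rule V_abs)
    show "\<bar>U x\<bar> \<le> 1/(1-\<gamma>)" using U_abs[of x] one_le by linarith
    show "V x \<le> U x" by (rule V_le_U)
  qed
  have Qext_ge_Q: "Q s a \<le> Qext s_tri s_circ Qb s a" for s a
  proof -
    have "\<gamma> * Ex_pmf (P s a) V \<le> \<gamma> * Ex_pmf (P s a) U"
      using EU_ge[of s a] gamma by (simp add: mult_left_mono)
    then show ?thesis using Qadm[of s a] unfolding Q_def' by linarith
  qed
  define G where "G = {s. U s = V s}"
  have circG: "s_circ \<in> G" by (simp add: G_def U_circ V_circ)
  have d0G: "set_pmf d0 \<subseteq> G"
  proof
    fix x assume x: "x \<in> set_pmf d0"
    have "Ex_pmf d0 (\<lambda>s. U s - V s) = Ex_pmf d0 U - Ex_pmf d0 V"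
      by (rule Bochner_Integration.integral_diff) (auto intro: int_bdd U_abs V_abs)
    also have "\<dots> = 0" using G0 unfolding U_def V_def by simp
    finally have "U x - V x = 0"
      proof (rule ex_zero_supp'[where f="\<lambda>x. U x - V x" and B=1, OF _ x])
        fix y
        show "0 \<le> U y - V y" using V_le_U[of y] by simp
        show "U y - V y \<le> 1" using U_b[of y] V_b[of y] by simp
      qed
    then show "x \<in> G" by (simp add: G_def)
  qed
  have propag: "set_pmf (P s a) \<subseteq> G" if g: "\<gamma> > 0" and sG: "s \<in> G" and a: "a \<in> set_pmf (pol' s)" for s a
  proof (cases "s = s_tri \<or> s = s_circ")
    case True then show ?thesis using circG by (auto simp: tri_trans circ_abs)
  next
    case False
    have "Qext s_tri s_circ Qb s a \<le> V s"
    proof -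
      from a obtain a' where a': "a' \<in> set_pmf (pol s)"
        and ain: "a \<in> set_pmf (if (s, a') \<in> interv_set s_tri s_circ Qb mu 0 then mu s else return_pmf a')"
        unfolding pol'_def shielded_def by auto
      show ?thesis
      proof (cases "(s, a') \<in> interv_set s_tri s_circ Qb mu 0")
        case True
        then have amu: "a \<in> set_pmf (mu s)" using ain by simp
        have "Ex_pmf (mu s) (\<lambda>b. Qext s_tri s_circ Qb s b - V s) = U s - V s"
          unfolding U_def at_pol_def
          by (subst Bochner_Integration.integral_diff) (auto intro: int_bdd[where B=1] simp: Qext_b abs_le_iff)
        also have "\<dots> = 0" using sG by (simp add: G_def)
        finally have "Qext s_tri s_circ Qb s a - V s = 0"
        proof (rule ex_zero_supp'[where f="\<lambda>b. Qext s_tri s_circ Qb s b - V s" and B=1, OF _ amu])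
          fix b
          show "0 \<le> Qext s_tri s_circ Qb s b - V s"
            using V_le_Q[of s b] Qext_ge_Q[of s b] by linarith
          show "Qext s_tri s_circ Qb s b - V s \<le> 1"
            using Qext_b[of s b] V_b[of s] by linarith
        qed
        then show ?thesis by simp
      next
        case notI: False
        then have "a = a'" using ain by simp
        then have "\<not> (Qext s_tri s_circ Qb s a - U s > 0)"
          using notI False unfolding interv_set_def U_def by auto
        then show ?thesis using sG by (simp add: G_def)
      qed
    qed
    then have "\<gamma> * Ex_pmf (P s a) U \<le> \<gamma> * Ex_pmf (P s a) V"
      using Qadm[of s a] V_le_Q[of s a] unfolding Q_def' by linarith
    then have "Ex_pmf (P s a) U \<le> Ex_pmf (P s a) V" using g by simp
    then have eq: "Ex_pmf (P s a) U = Ex_pmf (P s a) V" using EU_ge[of s a] by simp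
    show ?thesis
    proof
      fix x assume x: "x \<in> set_pmf (P s a)"
      have "Ex_pmf (P s a) (\<lambda>s. U s - V s) = Ex_pmf (P s a) U - Ex_pmf (P s a) V"
        by (rule Bochner_Integration.integral_diff) (auto intro: int_bdd U_abs V_abs)
      also have "\<dots> = 0" using eq by simp
      finally have "U x - V x = 0"
        proof (rule ex_zero_supp'[where f="\<lambda>x. U x - V x" and B=1, OF _ x])
        fix y
        show "0 \<le> U y - V y" using V_le_U[of y] by simp
        show "U y - V y \<le> 1" using U_b[of y] V_b[of y] by simp
      qed
      then show "x \<in> G" by (simp add: G_def)
    qed
  qed
  have sdG: "set_pmf (state_dist P pol' d0 t) \<subseteq> G" if g: "\<gamma> > 0" for t
  proof (induction t)
    case 0 then show ?case using d0G by simp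
  next
    case (Suc t) then show ?case using propag[OF g] by fastforce
  qed
  show ?thesis
  proof (intro allI impI)
    fix s a
    assume occ: "occupancy P \<gamma> d0 (shielded s_tri s_circ Qb mu 0 pol) s > 0"
    have "\<exists>t. \<gamma>^t * pmf (state_dist P pol' d0 t) s \<noteq> 0"
    proof (rule ccontr)
      assume "\<not> ?thesis"
      then have "(\<lambda>t. \<gamma>^t * pmf (state_dist P pol' d0 t) s) = (\<lambda>_. 0)" by blast
      then have "(\<Sum>t. \<gamma>^t * pmf (state_dist P pol' d0 t) s) = 0" by simp
      then show False using occ unfolding occupancy_def pol'_def by simp
    qed
    then obtain t where t: "\<gamma>^t * pmf (state_dist P pol' d0 t) s \<noteq> 0" by blast
    then have sin: "s \<in> set_pmf (state_dist P pol' d0 t)" by (simp add: set_pmf_iff)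
    have "s \<in> G"
    proof (cases "\<gamma> = 0")
      case True
      then have "t = 0" using t by (cases t) auto
      then show ?thesis using sin d0G by auto
    next
      case False then show ?thesis using sdG sin gamma by auto
    qed
    then have "U s = V s" by (simp add: G_def)
    then show "Qext s_tri s_circ Qb s a - at_pol (Qext s_tri s_circ Qb) s mu
                \<ge> Q_fn P c \<gamma> pistar s a - at_pol (Q_fn P c \<gamma> pistar) s pistar"
      using Qext_ge_Q[of s a] atQ[of s] unfolding U_def Q_def by simp
  qed
qed

end
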